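(* Let $\Sigma$ be a finite disjoint union of compact connected one-dimensional Riemannian manifolds each having non-empty boundary, and let $g$ be a smooth positive function on $\Sigma$. Then $$\lambda(\Sigma,g)\geq \pi\left(\int_\Sigma g\right)^{-1}.$$
   Context: The weighted fundamental frequency is $$\lambda(\Sigma,g)=\inf_{\varphi}\left(\frac{\int_\Sigma |D\varphi|^2 g^{-1}}{\int_\Sigma\varphi^2 g}\right)^{1/2},$$ where $D\varphi$ is the derivative of $\varphi$ with respect to the arclength (inner metric) of $\Sigma$, integrals are with respect to arclength, and the infimum is over all Lipschitz functions $\varphi$ on $\Sigma$, not identically zero, with $\varphi=0$ on $\partial\Sigma$. *)

theory Defs
  imports "HOL-Analysis.Analysis"
begin

text \<open>Sigma is modelled (up to isometry) as a disjoint union of n closed intervals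
  [0, L i], i < n, each with arclength parametrisation. Functions on Sigma are families
  indexed by the component.\<close>

definition smooth_on_interval :: "real \<Rightarrow> real \<Rightarrow> (real \<Rightarrow> real) \<Rightarrow> bool" where
  "smooth_on_interval a b f \<longleftrightarrow>
     (\<exists>D :: nat \<Rightarrow> real \<Rightarrow> real.
        (\<forall>x\<in>{a..b}. D 0 x = f x) \<and>
        (\<forall>k. \<forall>x\<in>{a..b}. (D k has_real_derivative D (Suc k) x) (at x within {a..b})))"

definition admissible :: "nat \<Rightarrow> (nat \<Rightarrow> real) \<Rightarrow> (nat \<Rightarrow> real \<Rightarrow> real) \<Rightarrow> bool" where
  "admissible n L \<phi> \<longleftrightarrow>
     (\<forall>i<n. (\<exists>C. C-lipschitz_on {0..L i} (\<phi> i)) \<and> \<phi> i 0 = 0 \<and> \<phi> i (L i) = 0) \<and>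
     (\<exists>i<n. \<exists>x\<in>{0..L i}. \<phi> i x \<noteq> 0)"

definition weighted_fund_freq ::
  "nat \<Rightarrow> (nat \<Rightarrow> real) \<Rightarrow> (nat \<Rightarrow> real \<Rightarrow> real) \<Rightarrow> real" where
  "weighted_fund_freq n L g =
     Inf {sqrt ((\<Sum>i<n. integral {0..L i}
                    (\<lambda>x. (vector_derivative (\<phi> i) (at x within {0..L i}))\<^sup>2 / g i x))
              / (\<Sum>i<n. integral {0..L i} (\<lambda>x. (\<phi> i x)\<^sup>2 * g i x)))
          | \<phi>. admissible n L \<phi>}"

end

theory Submission imports Defs begin
lemma vitali_mono:
  fixes F :: "real \<Rightarrow> real" and E :: "real set"
  assumes mono: "\<And>x y. x \<le> y \<Longrightarrow> F x \<le> F y" and cont: "continuous_on UNIV F"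
    and p0: "0 < p" and pq: "p < q"
    and Emeas: "E \<in> lmeasurable"
    and R: "\<And>x d. x \<in> E \<Longrightarrow> 0 < d \<Longrightarrow> \<exists>h. 0 < h \<and> h < d \<and> q*h < F (x+h) - F x"
    and L: "\<And>x d. x \<in> E \<Longrightarrow> 0 < d \<Longrightarrow> \<exists>h. 0 < h \<and> h < d \<and> F x - F (x-h) < p*h"
  shows "negligible E"
proof -
  let ?m = "measure lebesgue E"
  let ?\<mu> = "interval_measure F"
  have Eleb: "E \<in> sets lebesgue" using Emeas by (simp add: fmeasurable_def)
  have lamE: "emeasure lebesgue E = ennreal ?m"
    using Emeas unfolding fmeasurable_def by (intro emeasure_eq_ennreal_measure) auto
  have muIcc: "emeasure ?\<mu> {a..b} = ennreal (F b - F a)" if "a \<le> b" for a b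
    using emeasure_interval_measure_Icc[OF that mono cont] by simp
  have key: "q * ?m \<le> p * (?m + e)" if e: "e > 0" for e
  proof -
    obtain U where U: "open U" "E \<subseteq> U" "(U - E) \<in> lmeasurable" "emeasure lebesgue (U - E) < ennreal e"
      using sets_lebesgue_outer_open[OF Eleb e] by blast
    have Uleb: "U \<in> sets lebesgue"
    proof -
      have "U = E \<union> (U - E)" using U(2) by blast
      then show ?thesis using Eleb U(3) by (metis fmeasurableD sets.Un)
    qed
    have lamU: "emeasure lebesgue U \<le> emeasure lebesgue E + ennreal e"
    proof -
      have "emeasure lebesgue U \<le> emeasure lebesgue E + emeasure lebesgue (U - E)"
        using Eleb U(3) emeasure_subadditive[of E lebesgue "U - E"] U(2)
        by (metis Un_Diff_cancel fmeasurableD sup.absorb_iff2)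
      then show ?thesis using U(4) by (meson add_left_mono dual_order.trans less_imp_le)
    qed
    define K1 where "K1 = {(x,h). x \<in> E \<and> 0 < h \<and> {x-h..x} \<subseteq> U \<and> F x - F (x-h) < p*h}"
    define a1 where "a1 = (\<lambda>(x::real,h::real). x - h/2)"
    define r1 where "r1 = (\<lambda>(x::real,h::real). h/2)"
    have cb1: "cball (a1 i) (r1 i) = {fst i - snd i .. fst i}" for i
      by (cases i) (simp add: a1_def r1_def cball_eq_atLeastAtMost)
    have v1a: "0 < r1 i" if "i \<in> K1" for i using that by (auto simp: K1_def r1_def)
    have v1b: "\<exists>i. i \<in> K1 \<and> x \<in> cball (a1 i) (r1 i) \<and> r1 i < d" if xE: "x \<in> E" and d0: "0 < d" for x d
    proof -
      obtain \<epsilon> where \<epsilon>: "\<epsilon> > 0" "ball x \<epsilon> \<subseteq> U" using openE[OF U(1)] U(2) xE by blast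
      obtain h where h: "0 < h" "h < min (2*d) \<epsilon>" "F x - F (x-h) < p*h"
        using L[OF xE, of "min (2*d) \<epsilon>"] d0 \<epsilon>(1) by auto
      have "{x-h..x} \<subseteq> ball x \<epsilon>" using h by (auto simp: dist_real_def)
      then have "(x,h) \<in> K1" using h \<epsilon> xE by (auto simp: K1_def)
      moreover have "x \<in> cball (a1 (x,h)) (r1 (x,h))" using h by (simp add: cb1)
      moreover have "r1 (x,h) < d" using h by (simp add: r1_def)
      ultimately show ?thesis by blast
    qed
    obtain C1 where C1: "countable C1" "C1 \<subseteq> K1"
       "pairwise (\<lambda>i j. disjnt (cball (a1 i) (r1 i)) (cball (a1 j) (r1 j))) C1"
       "negligible (E - (\<Union>i\<in>C1. cball (a1 i) (r1 i)))"
      using Vitali_covering_theorem_cballs[where a=a1 and r=r1 and K=K1 and S=E, OF v1a v1b] by blast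
    define I where "I = (\<lambda>i. cball (a1 i) (r1 i))"
    have I_eq: "I i = {fst i - snd i .. fst i}" for i by (simp add: I_def cb1)
    have K1D: "fst i \<in> E \<and> 0 < snd i \<and> {fst i - snd i..fst i} \<subseteq> U \<and> F (fst i) - F (fst i - snd i) < p * snd i"
      if "i \<in> C1" for i
    proof -
      have "i \<in> K1" using C1(2) that by blast
      then show ?thesis by (cases i) (simp add: K1_def)
    qed
    have disjI: "disjoint_family_on I C1" using C1(3)
      unfolding disjoint_family_on_def pairwise_def disjnt_def I_def by blast
    have Ileb: "I i \<in> sets lebesgue" for i by (simp add: I_eq)
    have Ibor: "I i \<in> sets borel" for i by (simp add: I_eq)
    have UIbor: "(\<Union>i\<in>C1. I i) \<in> sets borel" using C1(1) Ibor by (intro sets.countable_UN'') auto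
    have UIleb: "(\<Union>i\<in>C1. I i) \<in> sets lebesgue" using C1(1) Ileb by (intro sets.countable_UN'') auto
    have lamUI: "emeasure lebesgue (\<Union>i\<in>C1. I i) = (\<integral>\<^sup>+i. emeasure lebesgue (I i) \<partial>count_space C1)"
      by (rule emeasure_UN_countable[OF Ileb C1(1) disjI])
    have muUI: "emeasure ?\<mu> (\<Union>i\<in>C1. I i) = (\<integral>\<^sup>+i. emeasure ?\<mu> (I i) \<partial>count_space C1)"
      by (rule emeasure_UN_countable[OF _ C1(1) disjI]) (simp add: Ibor)
    have "emeasure ?\<mu> (\<Union>i\<in>C1. I i) \<le> (\<integral>\<^sup>+i. ennreal p * emeasure lebesgue (I i) \<partial>count_space C1)"
      unfolding muUI
    proof (rule nn_integral_mono)
      fix i assume "i \<in> space (count_space C1)"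
      then have i: "i \<in> C1" by simp
      have "emeasure ?\<mu> (I i) = ennreal (F (fst i) - F (fst i - snd i))"
        using K1D[OF i] by (simp add: I_eq muIcc)
      also have "\<dots> \<le> ennreal (p * snd i)" using K1D[OF i] by (intro ennreal_leI) simp
      also have "\<dots> = ennreal p * emeasure lebesgue (I i)"
        using K1D[OF i] p0 by (simp add: I_eq ennreal_mult)
      finally show "emeasure ?\<mu> (I i) \<le> ennreal p * emeasure lebesgue (I i)" .
    qed
    also have "\<dots> = ennreal p * emeasure lebesgue (\<Union>i\<in>C1. I i)"
      unfolding lamUI by (rule nn_integral_cmult) simp
    also have "\<dots> \<le> ennreal p * emeasure lebesgue U"
    proof (intro mult_left_mono emeasure_mono)
      show "(\<Union>i\<in>C1. I i) \<subseteq> U" using K1D I_eq by blast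
      show "U \<in> sets lebesgue" using Uleb .
    qed simp
    finally have chain1: "emeasure ?\<mu> (\<Union>i\<in>C1. I i) \<le> ennreal p * emeasure lebesgue U" .
    define E2 where "E2 = E \<inter> (\<Union>i\<in>C1. ball (a1 i) (r1 i))"
    define K2 where "K2 = {(y,k). 0 < k \<and> (\<exists>i\<in>C1. {y..y+k} \<subseteq> I i) \<and> q*k < F (y+k) - F y}"
    define a2 where "a2 = (\<lambda>(y::real,k::real). y + k/2)"
    define r2 where "r2 = (\<lambda>(y::real,k::real). k/2)"
    have cb2: "cball (a2 j) (r2 j) = {fst j .. fst j + snd j}" for j
      by (cases j) (simp add: a2_def r2_def cball_eq_atLeastAtMost)
    have v2a: "0 < r2 j" if "j \<in> K2" for j using that by (auto simp: K2_def r2_def)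
    have v2b: "\<exists>j. j \<in> K2 \<and> y \<in> cball (a2 j) (r2 j) \<and> r2 j < d" if yE: "y \<in> E2" and d0: "0 < d" for y d
    proof -
      obtain i where i: "i \<in> C1" "y \<in> ball (a1 i) (r1 i)" using yE by (auto simp: E2_def)
      obtain \<epsilon> where \<epsilon>: "\<epsilon> > 0" "ball y \<epsilon> \<subseteq> ball (a1 i) (r1 i)"
        using openE[OF open_ball i(2)] by blast
      have yE': "y \<in> E" using yE by (simp add: E2_def)
      obtain k where k: "0 < k" "k < min (2*d) \<epsilon>" "q*k < F (y+k) - F y"
        using R[OF yE', of "min (2*d) \<epsilon>"] d0 \<epsilon>(1) by auto
      have "{y..y+k} \<subseteq> ball y \<epsilon>" using k by (auto simp: dist_real_def)
      also have "\<dots> \<subseteq> I i" using \<epsilon>(2) ball_subset_cball unfolding I_def by blast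
      finally have "(y,k) \<in> K2" using k i(1) by (auto simp: K2_def)
      moreover have "y \<in> cball (a2 (y,k)) (r2 (y,k))" using k by (simp add: cb2)
      moreover have "r2 (y,k) < d" using k by (simp add: r2_def)
      ultimately show ?thesis by blast
    qed
    obtain C2 where C2: "countable C2" "C2 \<subseteq> K2"
       "pairwise (\<lambda>i j. disjnt (cball (a2 i) (r2 i)) (cball (a2 j) (r2 j))) C2"
       "negligible (E2 - (\<Union>i\<in>C2. cball (a2 i) (r2 i)))"
      using Vitali_covering_theorem_cballs[where a=a2 and r=r2 and K=K2 and S=E2, OF v2a v2b] by blast
    define J where "J = (\<lambda>i. cball (a2 i) (r2 i))"
    have J_eq: "J j = {fst j .. fst j + snd j}" for j by (simp add: J_def cb2)
    have K2D: "0 < snd j \<and> (\<exists>i\<in>C1. J j \<subseteq> I i) \<and> q * snd j < F (fst j + snd j) - F (fst j)"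
      if "j \<in> C2" for j
    proof -
      have "j \<in> K2" using C2(2) that by blast
      then show ?thesis by (cases j) (simp add: K2_def J_eq)
    qed
    have disjJ: "disjoint_family_on J C2" using C2(3)
      unfolding disjoint_family_on_def pairwise_def disjnt_def J_def by blast
    have Jleb: "J i \<in> sets lebesgue" for i by (simp add: J_eq)
    have Jbor: "J i \<in> sets borel" for i by (simp add: J_eq)
    have UJbor: "(\<Union>i\<in>C2. J i) \<in> sets borel" using C2(1) Jbor by (intro sets.countable_UN'') auto
    have UJleb: "(\<Union>i\<in>C2. J i) \<in> sets lebesgue" using C2(1) Jleb by (intro sets.countable_UN'') auto
    have lamUJ: "emeasure lebesgue (\<Union>i\<in>C2. J i) = (\<integral>\<^sup>+i. emeasure lebesgue (J i) \<partial>count_space C2)"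
      by (rule emeasure_UN_countable[OF Jleb C2(1) disjJ])
    have muUJ: "emeasure ?\<mu> (\<Union>i\<in>C2. J i) = (\<integral>\<^sup>+i. emeasure ?\<mu> (J i) \<partial>count_space C2)"
      by (rule emeasure_UN_countable[OF _ C2(1) disjJ]) (simp add: Jbor)
    have JI: "(\<Union>i\<in>C2. J i) \<subseteq> (\<Union>i\<in>C1. I i)" using K2D by blast
    define Nn where "Nn = (E2 - (\<Union>i\<in>C2. J i)) \<union> (E - (\<Union>i\<in>C1. I i)) \<union> \<Union>((\<lambda>i. sphere (a1 i) (r1 i)) ` C1)"
    have negNn: "negligible Nn"
      unfolding Nn_def
    proof (intro negligible_Un)
      show "negligible (E2 - (\<Union>i\<in>C2. J i))" using C2(4) by (simp add: J_def)
      show "negligible (E - (\<Union>i\<in>C1. I i))" using C1(4) by (simp add: I_def)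
      show "negligible (\<Union>((\<lambda>i. sphere (a1 i) (r1 i)) ` C1))"
        using C1(1) by (intro negligible_countable_Union) (auto simp: negligible_sphere)
    qed
    have ENn: "E \<subseteq> (\<Union>i\<in>C2. J i) \<union> Nn"
    proof
      fix x assume xE: "x \<in> E"
      show "x \<in> (\<Union>i\<in>C2. J i) \<union> Nn"
      proof (cases "x \<in> (\<Union>i\<in>C1. I i)")
        case False then show ?thesis using xE by (auto simp: Nn_def)
      next
        case True
        then obtain i where i: "i \<in> C1" "x \<in> cball (a1 i) (r1 i)" by (auto simp: I_def)
        show ?thesis
        proof (cases "x \<in> ball (a1 i) (r1 i)")
          case True
          then have "x \<in> E2" using i xE by (auto simp: E2_def)
          then show ?thesis by (auto simp: Nn_def)
        next
          case False
          then have "x \<in> sphere (a1 i) (r1 i)" using i(2) by (simp add: dist_real_def)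
          then show ?thesis using i(1) by (auto simp: Nn_def)
        qed
      qed
    qed
    have NnNull: "Nn \<in> null_sets lebesgue" using negNn by (simp add: negligible_iff_null_sets)
    have lamE_UJ: "emeasure lebesgue E \<le> emeasure lebesgue (\<Union>i\<in>C2. J i)"
    proof -
      have "emeasure lebesgue E \<le> emeasure lebesgue ((\<Union>i\<in>C2. J i) \<union> Nn)"
        using ENn UJleb NnNull by (intro emeasure_mono) auto
      also have "\<dots> = emeasure lebesgue (\<Union>i\<in>C2. J i)"
        using UJleb NnNull by (rule emeasure_Un_null_set)
      finally show ?thesis .
    qed
    have "ennreal q * emeasure lebesgue (\<Union>i\<in>C2. J i) = (\<integral>\<^sup>+i. ennreal q * emeasure lebesgue (J i) \<partial>count_space C2)"
      unfolding lamUJ by (rule nn_integral_cmult[symmetric]) simp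
    also have "\<dots> \<le> emeasure ?\<mu> (\<Union>i\<in>C2. J i)"
      unfolding muUJ
    proof (rule nn_integral_mono)
      fix j assume "j \<in> space (count_space C2)"
      then have j: "j \<in> C2" by simp
      have "ennreal q * emeasure lebesgue (J j) = ennreal (q * snd j)"
        using K2D[OF j] pq p0 by (simp add: J_eq ennreal_mult)
      also have "\<dots> \<le> ennreal (F (fst j + snd j) - F (fst j))" using K2D[OF j] by (intro ennreal_leI) simp
      also have "\<dots> = emeasure ?\<mu> (J j)"
        using K2D[OF j] by (simp add: J_eq muIcc)
      finally show "ennreal q * emeasure lebesgue (J j) \<le> emeasure ?\<mu> (J j)" .
    qed
    also have "\<dots> \<le> emeasure ?\<mu> (\<Union>i\<in>C1. I i)"
      using JI UIbor by (intro emeasure_mono) auto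
    also have "\<dots> \<le> ennreal p * emeasure lebesgue U" by (rule chain1)
    also have "\<dots> \<le> ennreal p * (emeasure lebesgue E + ennreal e)"
      using lamU by (intro mult_left_mono) auto
    finally have ch: "ennreal q * emeasure lebesgue (\<Union>i\<in>C2. J i) \<le> ennreal p * (emeasure lebesgue E + ennreal e)" .
    have "ennreal q * emeasure lebesgue E \<le> ennreal q * emeasure lebesgue (\<Union>i\<in>C2. J i)"
      using lamE_UJ by (intro mult_left_mono) auto
    with ch have "ennreal q * ennreal ?m \<le> ennreal p * (ennreal ?m + ennreal e)"
      unfolding lamE by (meson order_trans)
    then have "ennreal (q * ?m) \<le> ennreal (p * (?m + e))"
      using p0 pq e by (simp add: ennreal_mult ennreal_plus[symmetric] del: ennreal_plus)
    then show ?thesis using p0 e by (subst ennreal_le_iff[symmetric]) auto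
  qed
  have m0: "?m \<le> 0"
  proof (rule ccontr)
    assume "\<not> ?m \<le> 0"
    then have mpos: "?m > 0" by simp
    define e where "e = (q - p) * ?m / (2 * p)"
    have e0: "e > 0" using mpos pq p0 by (simp add: e_def)
    have "q * ?m \<le> p * (?m + e)" using key[OF e0] .
    also have "\<dots> = p * ?m + (q - p) * ?m / 2" using p0 by (simp add: e_def field_simps)
    finally show False using mpos pq by (simp add: field_simps)
  qed
  then have "?m = 0" using measure_nonneg[of lebesgue E] by linarith
  then show ?thesis using Emeas by (simp add: negligible_iff_measure0)
qed

definition badR :: "(real \<Rightarrow> real) \<Rightarrow> real \<Rightarrow> real \<Rightarrow> real set" where
  "badR F p q = {x. (\<forall>n::nat. \<exists>h\<in>\<rat>. 0<h \<and> h<1/Suc n \<and> q*h < F(x+h) - F x) \<and>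
   (\<forall>n::nat. \<exists>h\<in>\<rat>. 0<h \<and> h<1/Suc n \<and> F x - F(x-h) < p*h)}"

lemma badR_eq2: "badR F p q = (\<Inter>n::nat. \<Union>h\<in>\<rat>\<inter>{0<..<1/Suc n}. {x. q*h < F(x+h) - F x}) \<inter>
                (\<Inter>n::nat. \<Union>h\<in>\<rat>\<inter>{0<..<1/Suc n}. {x. F x - F(x-h) < p*h})"
  unfolding badR_def by (auto simp: Bex_def)

lemma freq_transfer:
  assumes "\<forall>n::nat. \<exists>h\<in>\<rat>. 0<h \<and> h<1/Suc n \<and> P h" "\<And>h. 0<h \<Longrightarrow> P h \<Longrightarrow> Q h"
  shows "\<forall>n::nat. \<exists>h\<in>\<rat>. 0<h \<and> h<1/Suc n \<and> Q h"
  using assms by meson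

lemma badR_borel:
  assumes cont: "continuous_on UNIV F"
  shows "badR F p q \<in> sets borel"
proof -
  have c1: "continuous_on UNIV (\<lambda>x. F (x + h))" for h
    by (rule continuous_on_compose2[OF cont]) (auto intro!: continuous_on_add continuous_on_id continuous_on_const)
  have c2: "continuous_on UNIV (\<lambda>x. F (x - h))" for h
    by (rule continuous_on_compose2[OF cont]) (auto intro!: continuous_on_diff continuous_on_id continuous_on_const)
  have o1: "{x. q*h < F(x+h) - F x} \<in> sets borel" for h
    by (intro borel_open open_Collect_less continuous_on_const continuous_on_diff[OF c1 cont])
  have o2: "{x. F x - F(x-h) < p*h} \<in> sets borel" for h
    by (intro borel_open open_Collect_less continuous_on_const continuous_on_diff[OF cont c2])
  have cq: "countable (\<rat> \<inter> A)" for A :: "real set"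
    by (rule countable_subset[OF _ countable_rat]) auto
  show ?thesis unfolding badR_eq2
    by (intro sets.Int sets.countable_INT'' sets.countable_UN'' cq o1 o2) simp_all
qed

lemma borel_lebesgue_real: "(S::real set) \<in> sets borel \<Longrightarrow> S \<in> sets lebesgue"
  by (metis sets_completionI_sets sets_lborel)

lemma badR_negligible:
  fixes G :: "real \<Rightarrow> real"
  assumes mono: "\<And>x y. x \<le> y \<Longrightarrow> G x \<le> G y" and cont: "continuous_on UNIV G"
    and p0: "0 < p" and pq: "p < q"
  shows "negligible (badR G p q)"
proof -
  have bor: "badR G p q \<in> sets borel" by (rule badR_borel[OF cont])
  have neg: "negligible ({-real k<..<real k} \<inter> badR G p q)" for k
  proof (rule vitali_mono[OF mono cont p0 pq])
    show "{-real k<..<real k} \<inter> badR G p q \<in> lmeasurable"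
      by (intro fmeasurable_Int_fmeasurable borel_lebesgue_real bor) simp_all
  next
    fix x d assume x: "x \<in> {-real k<..<real k} \<inter> badR G p q" and d: "(0::real) < d"
    obtain n where n: "inverse (real (Suc n)) < d" using reals_Archimedean[OF d] by blast
    have xb: "\<forall>n::nat. \<exists>h\<in>\<rat>. 0<h \<and> h<1/Suc n \<and> q*h < G(x+h) - G x"
      using x unfolding badR_def by simp
    from xb[rule_format, of n] obtain h where h: "h \<in> \<rat>" "0 < h" "h < 1/Suc n" "q*h < G(x+h) - G x"
      by auto
    have "1/real (Suc n) = inverse (real (Suc n))" by (simp add: inverse_eq_divide)
    then have "h < d" using h(3) n by linarith
    then show "\<exists>h>0. h < d \<and> q * h < G (x + h) - G x"
      using h by blast
  next
    fix x d assume x: "x \<in> {-real k<..<real k} \<inter> badR G p q" and d: "(0::real) < d"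
    obtain n where n: "inverse (real (Suc n)) < d" using reals_Archimedean[OF d] by blast
    have xb: "\<forall>n::nat. \<exists>h\<in>\<rat>. 0<h \<and> h<1/Suc n \<and> G x - G(x-h) < p*h"
      using x unfolding badR_def by simp
    from xb[rule_format, of n] obtain h where h: "h \<in> \<rat>" "0 < h" "h < 1/Suc n" "G x - G(x-h) < p*h"
      by auto
    have "1/real (Suc n) = inverse (real (Suc n))" by (simp add: inverse_eq_divide)
    then have "h < d" using h(3) n by linarith
    then show "\<exists>h>0. h < d \<and> G x - G (x - h) < p * h"
      using h by blast
  qed
  have "badR G p q \<subseteq> (\<Union>k. {-real k<..<real k} \<inter> badR G p q)"
  proof
    fix x assume x: "x \<in> badR G p q"
    obtain k where "\<bar>x\<bar> < real k" using reals_Archimedean2 by blast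
    then have "x \<in> {-real k<..<real k} \<inter> badR G p q" using x by (simp add: abs_less_iff)
    then show "x \<in> (\<Union>k. {-real k<..<real k} \<inter> badR G p q)" by blast
  qed
  then show ?thesis by (rule negligible_subset[OF negligible_Union_nat[OF neg]])
qed

lemma ratify:
  fixes f :: "real \<Rightarrow> real"
  assumes cont: "continuous_on {0<..} f"
    and fr: "\<And>d. d > 0 \<Longrightarrow> \<exists>h>0. h < d \<and> 0 < f h"
  shows "\<exists>h\<in>\<rat>. 0 < h \<and> h < 1/Suc n \<and> 0 < f h"
proof -
  have "(0::real) < 1/Suc n" by simp
  then obtain h where h: "h > 0" "h < 1/Suc n" "0 < f h" using fr by blast
  have "isCont f h" using cont h(1) by (simp add: continuous_on_eq_continuous_at)
  then have "eventually (\<lambda>t. 0 < f t) (nhds h)"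
    using h(3) by (simp add: isCont_def order_tendstoD(1) tendsto_at_iff_tendsto_nhds)
  then obtain \<epsilon> where \<epsilon>: "\<epsilon> > 0" "\<And>t. dist t h < \<epsilon> \<Longrightarrow> 0 < f t"
    unfolding eventually_nhds_metric by blast
  have "max 0 (h - \<epsilon>) < min (1/Suc n) (h + \<epsilon>)" using h \<epsilon> by auto
  then obtain r where r: "r \<in> \<rat>" "max 0 (h - \<epsilon>) < r" "r < min (1/Suc n) (h + \<epsilon>)"
    using Rats_dense_in_real by blast
  have "dist r h < \<epsilon>" using r by (auto simp: dist_real_def)
  then show ?thesis using r \<epsilon> by (intro bexI[of _ r]) auto
qed

lemma limsup_le_liminf_rat:
  fixes A1 A2 :: "real \<Rightarrow> real"
  assumes c1: "continuous_on {0<..} A1" and c2: "continuous_on {0<..} A2"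
    and nonneg: "\<And>h. h > 0 \<Longrightarrow> 0 \<le> A2 h"
    and good: "\<And>p q. p \<in> \<rat> \<Longrightarrow> q \<in> \<rat> \<Longrightarrow> 0 < p \<Longrightarrow> p < q \<Longrightarrow>
       \<not> ((\<forall>n::nat. \<exists>h\<in>\<rat>. 0<h \<and> h<1/Suc n \<and> q < A1 h) \<and> (\<forall>n::nat. \<exists>h\<in>\<rat>. 0<h \<and> h<1/Suc n \<and> A2 h < p))"
  shows "Limsup (at_right 0) (\<lambda>h. ereal (A1 h)) \<le> Liminf (at_right 0) (\<lambda>h. ereal (A2 h))"
proof (rule ccontr)
  let ?U = "Limsup (at_right 0) (\<lambda>h. ereal (A1 h))"
  let ?u = "Liminf (at_right 0) (\<lambda>h. ereal (A2 h))"
  assume "\<not> ?U \<le> ?u"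
  then have lt: "?u < ?U" by simp
  obtain q' where q': "?u < ereal (real_of_rat q')" "ereal (real_of_rat q') < ?U"
    using ereal_dense3[OF lt] by blast
  obtain p' where p': "?u < ereal (real_of_rat p')" "ereal (real_of_rat p') < ereal (real_of_rat q')"
    using ereal_dense3[OF q'(1)] by blast
  define p where "p = real_of_rat p'"
  define q where "q = real_of_rat q'"
  have pq: "p < q" using p' by (simp add: p_def q_def)
  have "0 \<le> ?u"
    using nonneg by (intro Liminf_bounded) (auto simp: eventually_at_right_field intro: exI[of _ 1])
  then have "0 < ereal p" using p'(1) unfolding p_def by (meson le_less_trans)
  then have p0: "0 < p" by simp
  have fr1: "\<exists>h>0. h < d \<and> 0 < A1 h - q" if "d > 0" for d
  proof (rule ccontr)
    assume "\<not> ?thesis"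
    then have "eventually (\<lambda>h. ereal (A1 h) \<le> ereal q) (at_right 0)"
      unfolding eventually_at_right_field using that by (intro exI[of _ d]) auto
    then have "?U \<le> ereal q" by (rule Limsup_bounded)
    then show False using q' by (simp add: q_def)
  qed
  have fr2: "\<exists>h>0. h < d \<and> 0 < p - A2 h" if "d > 0" for d
  proof (rule ccontr)
    assume "\<not> ?thesis"
    then have "eventually (\<lambda>h. ereal p \<le> ereal (A2 h)) (at_right 0)"
      unfolding eventually_at_right_field using that by (intro exI[of _ d]) auto
    then have "ereal p \<le> ?u" by (rule Liminf_bounded)
    then show False using p' by (simp add: p_def)
  qed
  have r1: "\<exists>h\<in>\<rat>. 0<h \<and> h<1/Suc n \<and> q < A1 h" for n::nat
  proof -
    have "continuous_on {0<..} (\<lambda>h. A1 h - q)" by (intro continuous_on_diff c1 continuous_on_const)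
    from ratify[OF this fr1, of n] show ?thesis by auto
  qed
  have r2: "\<exists>h\<in>\<rat>. 0<h \<and> h<1/Suc n \<and> A2 h < p" for n::nat
  proof -
    have "continuous_on {0<..} (\<lambda>h. p - A2 h)" by (intro continuous_on_diff c2 continuous_on_const)
    from ratify[OF this fr2, of n] show ?thesis by auto
  qed
  have pr: "p \<in> \<rat>" "q \<in> \<rat>" by (simp_all add: p_def q_def)
  have "\<not> ((\<forall>n::nat. \<exists>h\<in>\<rat>. 0<h \<and> h<1/Suc n \<and> q < A1 h) \<and> (\<forall>n::nat. \<exists>h\<in>\<rat>. 0<h \<and> h<1/Suc n \<and> A2 h < p))"
    by (rule good[OF pr p0 pq])
  moreover have "(\<forall>n::nat. \<exists>h\<in>\<rat>. 0<h \<and> h<1/Suc n \<and> q < A1 h) \<and> (\<forall>n::nat. \<exists>h\<in>\<rat>. 0<h \<and> h<1/Suc n \<and> A2 h < p)"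
    by (intro conjI allI r1 r2)
  ultimately show False by (rule notE)
qed

lemma cont_shift_plus: "continuous_on UNIV G \<Longrightarrow> continuous_on S (\<lambda>h. G (x + h::real))"
  by (rule continuous_on_compose2[of UNIV G]) (auto intro!: continuous_on_add continuous_on_id continuous_on_const)

lemma cont_shift_minus: "continuous_on UNIV G \<Longrightarrow> continuous_on S (\<lambda>h. G (x - h::real))"
  by (rule continuous_on_compose2[of UNIV G]) (auto intro!: continuous_on_diff continuous_on_id continuous_on_const)

lemma good_point_diff:
  fixes G :: "real \<Rightarrow> real" and x :: real
  assumes mono: "\<And>x y. x \<le> y \<Longrightarrow> G x \<le> G y" and lip: "B-lipschitz_on UNIV G"
    and g1: "\<And>p q. p\<in>\<rat> \<Longrightarrow> q\<in>\<rat> \<Longrightarrow> 0<p \<Longrightarrow> p<q \<Longrightarrow> x \<notin> badR G p q"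
    and g2: "\<And>p q. p\<in>\<rat> \<Longrightarrow> q\<in>\<rat> \<Longrightarrow> 0<p \<Longrightarrow> p<q \<Longrightarrow> -x \<notin> badR (\<lambda>y. - G (- y)) p q"
  shows "\<exists>D. (G has_real_derivative D) (at x)"
proof -
  define Rq where "Rq h = (G (x+h) - G x)/h" for h
  define Lq where "Lq h = (G x - G (x-h))/h" for h
  have cont: "continuous_on UNIV G" using lip by (rule lipschitz_on_continuous_on)
  have cR: "continuous_on {0<..} Rq" unfolding Rq_def
    by (rule continuous_on_divide[OF continuous_on_diff[OF cont_shift_plus[OF cont] continuous_on_const] continuous_on_id]) auto
  have cL: "continuous_on {0<..} Lq" unfolding Lq_def
    by (rule continuous_on_divide[OF continuous_on_diff[OF continuous_on_const cont_shift_minus[OF cont]] continuous_on_id]) auto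
  have B0: "0 \<le> B" using lip by (rule lipschitz_on_nonneg)
  have bR: "0 \<le> Rq h \<and> Rq h \<le> B" if h: "h > 0" for h
  proof -
    have "G x \<le> G (x+h)" using h by (intro mono) simp
    moreover have "dist (G (x+h)) (G x) \<le> B * dist (x+h) x" using lip by (rule lipschitz_onD) simp_all
    ultimately have "0 \<le> G (x+h) - G x" "G (x+h) - G x \<le> B * h" using h by (simp_all add: dist_real_def)
    then show ?thesis using h by (simp add: Rq_def divide_le_eq)
  qed
  have bL: "0 \<le> Lq h \<and> Lq h \<le> B" if h: "h > 0" for h
  proof -
    have "G (x-h) \<le> G x" using h by (intro mono) simp
    moreover have "dist (G x) (G (x-h)) \<le> B * dist x (x-h)" using lip by (rule lipschitz_onD) simp_all
    ultimately have "0 \<le> G x - G (x-h)" "G x - G (x-h) \<le> B * h" using h by (simp_all add: dist_real_def)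
    then show ?thesis using h by (simp add: Lq_def divide_le_eq)
  qed
  have evpos: "eventually (\<lambda>h. (0::real) < h) (at_right 0)" by (rule eventually_at_right_less)
  have nb: "at_right (0::real) \<noteq> bot" by simp
  let ?UR = "Limsup (at_right 0) (\<lambda>h. ereal (Rq h))"
  let ?uR = "Liminf (at_right 0) (\<lambda>h. ereal (Rq h))"
  let ?UL = "Limsup (at_right 0) (\<lambda>h. ereal (Lq h))"
  let ?uL = "Liminf (at_right 0) (\<lambda>h. ereal (Lq h))"
  have c1: "?UR \<le> ?uL"
  proof (rule limsup_le_liminf_rat[OF cR cL])
    show "0 \<le> Lq h" if "h > 0" for h using bL[OF that] by simp
    fix p q :: real assume pq: "p\<in>\<rat>" "q\<in>\<rat>" "0<p" "p<q"
    show "\<not> ((\<forall>n::nat. \<exists>h\<in>\<rat>. 0<h \<and> h<1/Suc n \<and> q < Rq h) \<and> (\<forall>n::nat. \<exists>h\<in>\<rat>. 0<h \<and> h<1/Suc n \<and> Lq h < p))"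
    proof
      assume A: "(\<forall>n::nat. \<exists>h\<in>\<rat>. 0<h \<and> h<1/Suc n \<and> q < Rq h) \<and> (\<forall>n::nat. \<exists>h\<in>\<rat>. 0<h \<and> h<1/Suc n \<and> Lq h < p)"
      have "x \<in> badR G p q" unfolding badR_def mem_Collect_eq
      proof (intro conjI)
        show "\<forall>n::nat. \<exists>h\<in>\<rat>. 0<h \<and> h<1/Suc n \<and> q*h < G(x+h) - G x"
          using A[THEN conjunct1] by (rule freq_transfer) (simp add: Rq_def pos_less_divide_eq)
        show "\<forall>n::nat. \<exists>h\<in>\<rat>. 0<h \<and> h<1/Suc n \<and> G x - G(x-h) < p*h"
          using A[THEN conjunct2] by (rule freq_transfer) (simp add: Lq_def pos_divide_less_eq)
      qed
      then show False using g1[OF pq] by blast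
    qed
  qed
  have c2: "?UL \<le> ?uR"
  proof (rule limsup_le_liminf_rat[OF cL cR])
    show "0 \<le> Rq h" if "h > 0" for h using bR[OF that] by simp
    fix p q :: real assume pq: "p\<in>\<rat>" "q\<in>\<rat>" "0<p" "p<q"
    show "\<not> ((\<forall>n::nat. \<exists>h\<in>\<rat>. 0<h \<and> h<1/Suc n \<and> q < Lq h) \<and> (\<forall>n::nat. \<exists>h\<in>\<rat>. 0<h \<and> h<1/Suc n \<and> Rq h < p))"
    proof
      assume A: "(\<forall>n::nat. \<exists>h\<in>\<rat>. 0<h \<and> h<1/Suc n \<and> q < Lq h) \<and> (\<forall>n::nat. \<exists>h\<in>\<rat>. 0<h \<and> h<1/Suc n \<and> Rq h < p)"
      let ?H = "\<lambda>y. - G (- y)"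
      have "-x \<in> badR ?H p q" unfolding badR_def mem_Collect_eq
      proof (intro conjI)
        show "\<forall>n::nat. \<exists>h\<in>\<rat>. 0<h \<and> h<1/Suc n \<and> q*h < ?H(-x+h) - ?H (-x)"
          using A[THEN conjunct1] by (rule freq_transfer) (simp add: Lq_def pos_less_divide_eq)
        show "\<forall>n::nat. \<exists>h\<in>\<rat>. 0<h \<and> h<1/Suc n \<and> ?H (-x) - ?H(-x-h) < p*h"
          using A[THEN conjunct2] by (rule freq_transfer) (simp add: Rq_def pos_divide_less_eq add.commute)
      qed
      then show False using g2[OF pq] by blast
    qed
  qed
  have c3: "?uR \<le> ?UR" by (rule Liminf_le_Limsup[OF nb])
  have c4: "?uL \<le> ?UL" by (rule Liminf_le_Limsup[OF nb])
  have lo: "0 \<le> ?uR"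
    by (rule Liminf_bounded) (use evpos bR in \<open>auto elim!: eventually_mono\<close>)
  have hi: "?UR \<le> ereal B"
    by (rule Limsup_bounded) (use evpos bR in \<open>auto elim!: eventually_mono\<close>)
  have eq1: "?uR = ?UR" "?uL = ?UR" "?UL = ?UR" using c1 c2 c3 c4 by (auto intro: order.antisym order.trans)
  obtain D where D: "?UR = ereal D" using lo hi eq1 by (cases ?UR) auto
  have tR: "(Rq \<longlongrightarrow> D) (at_right 0)"
    using tendsto_iff_Liminf_eq_Limsup[OF nb, of "\<lambda>h. ereal (Rq h)" "ereal D"] eq1 D
    by (simp add: lim_ereal)
  have tL: "(Lq \<longlongrightarrow> D) (at_right 0)"
    using tendsto_iff_Liminf_eq_Limsup[OF nb, of "\<lambda>h. ereal (Lq h)" "ereal D"] eq1 D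
    by (simp add: lim_ereal)
  let ?Q = "\<lambda>y. (G y - G x) / (y - x)"
  have "(?Q \<longlongrightarrow> D) (at_right x)"
  proof -
    have "(\<lambda>h. ?Q (h + x)) = Rq" by (rule ext) (simp add: Rq_def add.commute)
    then show ?thesis using tR by (simp add: filterlim_at_right_to_0[of ?Q _ x])
  qed
  moreover have "(?Q \<longlongrightarrow> D) (at_left x)"
  proof -
    have "(\<lambda>h. ?Q (- (h + - x))) = Lq"
    proof (rule ext)
      fix h show "?Q (- (h + - x)) = Lq h"
        by (cases "h = 0") (simp_all add: Lq_def field_simps)
    qed
    then show ?thesis using tL
      by (simp add: filterlim_at_left_to_right[of ?Q _ x] filterlim_at_right_to_0[of "\<lambda>y. ?Q (- y)" _ "-x"])
  qed
  ultimately have "(?Q \<longlongrightarrow> D) (at x)" by (simp add: filterlim_at_split)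
  then show ?thesis by (auto simp: has_field_derivative_iff)
qed

lemma mono_lip_diff_ae:
  fixes G :: "real \<Rightarrow> real"
  assumes mono: "\<And>x y. x \<le> y \<Longrightarrow> G x \<le> G y" and lip: "B-lipschitz_on UNIV G"
  shows "negligible {x. \<not> (\<exists>D. (G has_real_derivative D) (at x))}"
proof -
  define H where "H = (\<lambda>y. - G (- y))"
  have cont: "continuous_on UNIV G" using lip by (rule lipschitz_on_continuous_on)
  have monoH: "H x \<le> H y" if "x \<le> y" for x y
    unfolding H_def using mono[of "-y" "-x"] that by simp
  have contH: "continuous_on UNIV H" unfolding H_def
    by (rule continuous_on_minus, rule continuous_on_compose2[OF cont]) (auto intro: continuous_on_minus continuous_on_id)
  define P where "P = {(p,q). p\<in>\<rat> \<and> q\<in>\<rat> \<and> 0<p \<and> p<(q::real)}"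
  have cP: "countable P"
    by (rule countable_subset[of _ "\<rat> \<times> \<rat>"]) (auto simp: P_def intro: countable_SIGMA countable_rat)
  have N1: "negligible (\<Union>((\<lambda>(p,q). badR G p q) ` P))"
  proof (rule negligible_countable_Union)
    show "countable ((\<lambda>(p,q). badR G p q) ` P)" using cP by (rule countable_image)
    fix S assume "S \<in> (\<lambda>(p,q). badR G p q) ` P"
    then obtain p q where "S = badR G p q" "0 < p" "p < q" by (auto simp: P_def)
    then show "negligible S" using badR_negligible[OF mono cont] by simp
  qed
  have N2: "negligible (\<Union>((\<lambda>(p,q). badR H p q) ` P))"
  proof (rule negligible_countable_Union)
    show "countable ((\<lambda>(p,q). badR H p q) ` P)" using cP by (rule countable_image)
    fix S assume "S \<in> (\<lambda>(p,q). badR H p q) ` P"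
    then obtain p q where "S = badR H p q" "0 < p" "p < q" by (auto simp: P_def)
    then show "negligible S" using badR_negligible[OF monoH contH] by simp
  qed
  have N2': "negligible (uminus ` \<Union>((\<lambda>(p,q). badR H p q) ` P))"
    by (rule negligible_differentiable_image_negligible[OF order_refl N2]) (intro differentiable_on_minus differentiable_on_id[unfolded id_def])
  have "{x. \<not> (\<exists>D. (G has_real_derivative D) (at x))} \<subseteq>
      \<Union>((\<lambda>(p,q). badR G p q) ` P) \<union> uminus ` \<Union>((\<lambda>(p,q). badR H p q) ` P)"
  proof
    fix x assume nd: "x \<in> {x. \<not> (\<exists>D. (G has_real_derivative D) (at x))}"
    show "x \<in> \<Union>((\<lambda>(p,q). badR G p q) ` P) \<union> uminus ` \<Union>((\<lambda>(p,q). badR H p q) ` P)"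
    proof (rule ccontr)
      assume nin: "\<not> ?thesis"
      have g1: "x \<notin> badR G p q" if "p\<in>\<rat>" "q\<in>\<rat>" "0<p" "p<q" for p q
      proof
        assume "x \<in> badR G p q"
        moreover have "(p,q) \<in> P" using that by (simp add: P_def)
        ultimately have "x \<in> \<Union>((\<lambda>(p,q). badR G p q) ` P)" by blast
        then show False using nin by blast
      qed
      have g2: "-x \<notin> badR (\<lambda>y. - G (- y)) p q" if "p\<in>\<rat>" "q\<in>\<rat>" "0<p" "p<q" for p q
      proof
        assume "-x \<in> badR (\<lambda>y. - G (- y)) p q"
        moreover have "(p,q) \<in> P" using that by (simp add: P_def)
        ultimately have "-x \<in> \<Union>((\<lambda>(p,q). badR H p q) ` P)" unfolding H_def by blast
        then have "- (-x) \<in> uminus ` \<Union>((\<lambda>(p,q). badR H p q) ` P)" by (rule imageI)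
        then show False using nin by simp
      qed
      from good_point_diff[OF mono lip g1 g2] nd show False by simp
    qed
  qed
  moreover have "negligible (\<Union>((\<lambda>(p,q). badR G p q) ` P) \<union> uminus ` \<Union>((\<lambda>(p,q). badR H p q) ` P))"
    using N1 N2' by (rule negligible_Un)
  ultimately show ?thesis by (rule negligible_subset[rotated])
qed

lemma lip_diff_ae:
  fixes F :: "real \<Rightarrow> real"
  assumes lip: "C-lipschitz_on UNIV F"
  shows "negligible {x. \<not> (\<exists>D. (F has_real_derivative D) (at x))}"
proof -
  define G where "G x = F x + C * x" for x
  have C0: "0 \<le> C" using lip by (rule lipschitz_on_nonneg)
  have Fd: "\<bar>F x - F y\<bar> \<le> C * \<bar>x - y\<bar>" for x y
    using lipschitz_onD[OF lip, of x y] by (simp add: dist_real_def)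
  have mono: "G x \<le> G y" if "x \<le> y" for x y
  proof -
    have "F x - F y \<le> C * (y - x)" using Fd[of x y] that by (simp add: abs_le_iff)
    then show ?thesis by (simp add: G_def algebra_simps)
  qed
  have lipG: "(C + C)-lipschitz_on UNIV G"
  proof (rule lipschitz_onI)
    fix x y :: real
    have "dist (G x) (G y) = \<bar>(F x - F y) + C * (x - y)\<bar>" by (simp add: G_def dist_real_def algebra_simps)
    also have "\<dots> \<le> \<bar>F x - F y\<bar> + \<bar>C * (x - y)\<bar>" by (rule abs_triangle_ineq)
    also have "\<dots> \<le> C * \<bar>x - y\<bar> + C * \<bar>x - y\<bar>" using Fd[of x y] C0 by (simp add: abs_mult)
    finally show "dist (G x) (G y) \<le> (C + C) * dist x y" by (simp add: dist_real_def algebra_simps)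
  qed (use C0 in simp)
  have "{x. \<not> (\<exists>D. (F has_real_derivative D) (at x))} \<subseteq> {x. \<not> (\<exists>D. (G has_real_derivative D) (at x))}"
  proof (clarsimp)
    fix x D assume d: "(G has_real_derivative D) (at x)" and nd: "\<forall>D. \<not> (F has_real_derivative D) (at x)"
    have "((\<lambda>x. G x - C * x) has_real_derivative (D - C * 1)) (at x)"
      by (intro DERIV_diff d DERIV_cmult DERIV_ident)
    moreover have "(\<lambda>x. G x - C * x) = F" by (rule ext) (simp add: G_def)
    ultimately show False using nd by simp
  qed
  then show ?thesis using mono_lip_diff_ae[OF mono lipG] by (rule negligible_subset[rotated])
qed

lemma clamp_dist: "\<bar>max a (min b x) - max a (min b y)\<bar> \<le> \<bar>x - (y::real)\<bar>"
  unfolding max_def min_def by (auto simp: abs_le_iff)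

lemma clamp_lip:
  fixes a b :: real and f :: "real \<Rightarrow> real"
  assumes ab: "a \<le> b" and lip: "C-lipschitz_on {a..b} f"
  shows "C-lipschitz_on UNIV (\<lambda>x. f (max a (min b x)))"
proof (rule lipschitz_onI)
  fix x y :: real
  have "dist (f (max a (min b x))) (f (max a (min b y))) \<le> C * dist (max a (min b x)) (max a (min b y))"
    using ab by (intro lipschitz_onD[OF lip]) auto
  also have "\<dots> \<le> C * dist x y"
    using lipschitz_on_nonneg[OF lip]
    by (intro mult_left_mono) (simp_all add: dist_real_def clamp_dist)
  finally show "dist (f (max a (min b x))) (f (max a (min b y))) \<le> C * dist x y" .
qed (rule lipschitz_on_nonneg[OF lip])

lemma lip_core:
  fixes a b :: real and f :: "real \<Rightarrow> real"
  assumes lip: "C-lipschitz_on {a..b} f" and ab: "a < b"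
  obtains N where "negligible N" "a \<in> N" "b \<in> N"
    "\<And>x. x \<in> {a..b} - N \<Longrightarrow> ((\<lambda>x. f (max a (min b x))) has_real_derivative vector_derivative f (at x within {a..b})) (at x)"
    "\<And>x. x \<in> {a..b} - N \<Longrightarrow> (f has_real_derivative vector_derivative f (at x within {a..b})) (at x)"
proof -
  let ?F = "\<lambda>x. f (max a (min b x))"
  have lipF: "C-lipschitz_on UNIV ?F" using ab lip by (intro clamp_lip) auto
  define N where "N = {x. \<not> (\<exists>D. (?F has_real_derivative D) (at x))} \<union> {a,b}"
  have negN: "negligible N" unfolding N_def using lip_diff_ae[OF lipF] by simp
  have der: "(?F has_real_derivative vector_derivative f (at x within {a..b})) (at x) \<and>
             (f has_real_derivative vector_derivative f (at x within {a..b})) (at x)" if x: "x \<in> {a..b} - N" for x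
  proof -
    obtain D where D: "(?F has_real_derivative D) (at x)" using x by (auto simp: N_def)
    have xi: "x \<in> {a<..<b}" using x by (auto simp: N_def)
    have fD: "(f has_real_derivative D) (at x)"
      by (rule has_field_derivative_transform_within_open[OF D, of "{a<..<b}"]) (use xi in auto)
    have "(f has_vector_derivative D) (at x within {a..b})"
      using fD by (simp add: has_real_derivative_iff_has_vector_derivative has_vector_derivative_at_within)
    then have "vector_derivative f (at x within {a..b}) = D"
      using ab xi by (intro vector_derivative_within_closed_interval) auto
    then show ?thesis using D fD by simp
  qed
  show ?thesis
    by (rule that[OF negN]) (use der in \<open>auto simp: N_def\<close>)
qed

definition qs :: "(real \<Rightarrow> real) \<Rightarrow> nat \<Rightarrow> real \<Rightarrow> real" where
  "qs F m x = (F (x + inverse (real (Suc m))) - F x) * real (Suc m)"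

lemma cont_shift_plus2: "continuous_on UNIV G \<Longrightarrow> continuous_on S (\<lambda>h. G (h + c::real))"
  by (rule continuous_on_compose2[of UNIV G]) (auto intro!: continuous_on_add continuous_on_id continuous_on_const)

lemma qs_cont:
  assumes cF: "continuous_on UNIV F" shows "continuous_on S (qs F m)"
proof -
  have "continuous_on UNIV (qs F m)" unfolding qs_def
    by (intro continuous_on_mult continuous_on_diff cont_shift_plus2[OF cF] cF continuous_on_const)
  then show ?thesis by (rule continuous_on_subset) simp
qed

lemma qs_bound:
  assumes "C-lipschitz_on UNIV F" shows "\<bar>qs F m x\<bar> \<le> C"
proof -
  have "dist (F (x + inverse (real (Suc m)))) (F x) \<le> C * dist (x + inverse (real (Suc m))) x"
    by (rule lipschitz_onD[OF assms]) auto
  then have "\<bar>F (x + inverse (real (Suc m))) - F x\<bar> \<le> C * inverse (real (Suc m))"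
    by (simp add: dist_real_def)
  then have "\<bar>F (x + inverse (real (Suc m))) - F x\<bar> * real (Suc m) \<le> C * inverse (real (Suc m)) * real (Suc m)"
    by (intro mult_right_mono) auto
  also have "C * inverse (real (Suc m)) * real (Suc m) = C" by simp
  finally show ?thesis by (simp add: qs_def abs_mult)
qed

lemma qs_lim:
  assumes "(F has_real_derivative D) (at x)"
  shows "(\<lambda>m. qs F m x) \<longlonglongrightarrow> D"
proof -
  have t: "((\<lambda>y. (F y - F x) / (y - x)) \<longlongrightarrow> D) (at x)"
    using assms by (simp add: has_field_derivative_iff)
  have y: "filterlim (\<lambda>m. x + inverse (real (Suc m))) (at x) sequentially"
    by (rule filterlim_atI[OF LIMSEQ_inverse_real_of_nat_add]) simp
  have "((\<lambda>m. (F (x + inverse (real (Suc m))) - F x) / (x + inverse (real (Suc m)) - x)) \<longlongrightarrow> D) sequentially"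
    by (rule filterlim_compose[OF t y])
  then show ?thesis by (simp add: qs_def divide_inverse)
qed

lemma lip_ftc:
  fixes a b :: real and f :: "real \<Rightarrow> real"
  assumes lip: "C-lipschitz_on {a..b} f" and ab: "a < b"
  shows "((\<lambda>x. vector_derivative f (at x within {a..b})) has_integral (f b - f a)) {a..b}"
proof -
  obtain N where N: "negligible N" "a \<in> N" "b \<in> N"
    "\<And>x. x \<in> {a..b} - N \<Longrightarrow> ((\<lambda>x. f (max a (min b x))) has_real_derivative vector_derivative f (at x within {a..b})) (at x)"
    "\<And>x. x \<in> {a..b} - N \<Longrightarrow> (f has_real_derivative vector_derivative f (at x within {a..b})) (at x)"
    by (rule lip_core[OF lip ab]) (rule that)
  define F where "F = (\<lambda>x. f (max a (min b x)))"
  have lipF: "C-lipschitz_on UNIV F" unfolding F_def using ab lip by (intro clamp_lip) auto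
  have contF: "continuous_on UNIV F" using lipF by (rule lipschitz_on_continuous_on)
  define d where "d = (\<lambda>x. vector_derivative f (at x within {a..b}))"
  define S where "S = {a..b} - N"
  have spk1: "negligible {x \<in> {a..b} - S. g x \<noteq> 0}" for g :: "real \<Rightarrow> real"
    by (rule negligible_subset[OF N(1)]) (auto simp: S_def)
  have spk2: "negligible {x \<in> S - {a..b}. g x \<noteq> 0}" for g :: "real \<Rightarrow> real"
  proof -
    have e: "{x \<in> S - {a..b}. g x \<noteq> 0} = {}" by (auto simp: S_def)
    show ?thesis unfolding e by (rule negligible_empty)
  qed
  define \<Phi> where "\<Phi> = (\<lambda>y. integral {a-1..y} F)"
  have \<Phi>d: "(\<Phi> has_real_derivative F y) (at y)" if y: "y \<in> {a-1<..<b+2}" for y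
  proof -
    have "(\<Phi> has_real_derivative F y) (at y within {a-1..b+2})"
      unfolding \<Phi>_def using y by (intro integral_has_real_derivative continuous_on_subset[OF contF]) auto
    moreover have "at y within {a-1..b+2} = at y"
      using y by (intro at_within_interior) (simp add: interior_atLeastAtMost_real)
    ultimately show ?thesis by simp
  qed
  define t where "t m = inverse (real (Suc m))" for m
  have t01: "0 < t m" "t m \<le> 1" for m by (auto simp: t_def field_simps)
  define V where "V m = ((\<Phi> (b + t m) - \<Phi> b) - (\<Phi> (a + t m) - \<Phi> a)) * real (Suc m)" for m
  have intq: "(qs F m has_integral V m) {a..b}" for m
  proof -
    have "((\<lambda>u. F (u + t m) - F u) has_integral ((\<Phi> (b + t m) - \<Phi> b) - (\<Phi> (a + t m) - \<Phi> a))) {a..b}"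
    proof -
      have "((\<lambda>u. F (u + t m) - F u) has_integral ((\<lambda>u. \<Phi> (u + t m) - \<Phi> u) b - (\<lambda>u. \<Phi> (u + t m) - \<Phi> u) a)) {a..b}"
      proof (rule fundamental_theorem_of_calculus)
        show "a \<le> b" using ab by simp
        fix u assume u: "u \<in> {a..b}"
        have d1: "(\<Phi> has_real_derivative F (u + t m)) (at (u + t m))"
          using u t01[of m] by (intro \<Phi>d) auto
        have d1': "((\<lambda>u. \<Phi> (u + t m)) has_real_derivative F (u + t m)) (at u)"
          using d1 by (simp add: DERIV_shift)
        have d2: "(\<Phi> has_real_derivative F u) (at u)" using u by (intro \<Phi>d) auto
        have "((\<lambda>u. \<Phi> (u + t m) - \<Phi> u) has_real_derivative (F (u + t m) - F u)) (at u)"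
          by (rule DERIV_diff[OF d1' d2])
        then show "((\<lambda>u. \<Phi> (u + t m) - \<Phi> u) has_vector_derivative (F (u + t m) - F u)) (at u within {a..b})"
          by (simp add: has_real_derivative_iff_has_vector_derivative has_vector_derivative_at_within)
      qed
      then show ?thesis by simp
    qed
    from has_integral_mult_left[OF this, of "real (Suc m)"]
    show ?thesis unfolding V_def qs_def t_def by simp
  qed
  have limV: "V \<longlonglongrightarrow> F b - F a"
  proof -
    have "(\<lambda>m. qs \<Phi> m b) \<longlonglongrightarrow> F b" using ab by (intro qs_lim \<Phi>d) auto
    moreover have "(\<lambda>m. qs \<Phi> m a) \<longlonglongrightarrow> F a" using ab by (intro qs_lim \<Phi>d) auto
    ultimately have "(\<lambda>m. qs \<Phi> m b - qs \<Phi> m a) \<longlonglongrightarrow> F b - F a" by (rule tendsto_diff)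
    moreover have "(\<lambda>m. qs \<Phi> m b - qs \<Phi> m a) = V"
      by (rule ext) (simp add: V_def qs_def t_def algebra_simps)
    ultimately show ?thesis by simp
  qed
  have Fab: "F a = f a" "F b = f b" using ab by (auto simp: F_def)
  have intS: "qs F m integrable_on S" for m
    by (rule integrable_spike_set[OF has_integral_integrable[OF intq[of m]] spk1 spk2])
  have intSeq: "integral S (qs F m) = V m" for m
  proof -
    have "integral S (qs F m) = integral {a..b} (qs F m)"
      by (rule integral_spike_set[OF spk1 spk2, symmetric])
    also have "\<dots> = V m" using intq[of m] by (rule integral_unique)
    finally show ?thesis .
  qed
  have cC: "(\<lambda>x. C) integrable_on S"
  proof -
    have "(\<lambda>x. C) integrable_on {a..b}" by (intro integrable_continuous_real continuous_on_const)
    then show ?thesis by (rule integrable_spike_set[OF _ spk1 spk2])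
  qed
  have conv: "(\<lambda>m. qs F m x) \<longlonglongrightarrow> d x" if x: "x \<in> S" for x
    unfolding d_def F_def using x by (intro qs_lim N(4)) (auto simp: S_def)
  have bnd: "norm (qs F k x) \<le> C" if "x \<in> S" for k x using qs_bound[OF lipF] by simp
  note dc = dominated_convergence[OF intS cC bnd conv]
  have "integral S d = F b - F a"
    using dc(2) limV unfolding intSeq by (rule LIMSEQ_unique)
  then have "(d has_integral (f b - f a)) S" using integrable_integral[OF dc(1)] Fab by simp
  then have "(d has_integral (f b - f a)) {a..b}"
    by (subst has_integral_spike_set_eq[OF spk1 spk2])
  then show ?thesis by (simp add: d_def)
qed

lemma lip_sq_integrable:
  fixes a b :: real and f e :: "real \<Rightarrow> real"
  assumes lip: "C-lipschitz_on {a..b} f" and ab: "a < b" and ce: "continuous_on {a..b} e"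
  shows "(\<lambda>x. e x * (vector_derivative f (at x within {a..b}))\<^sup>2) integrable_on {a..b}"
proof -
  obtain N where N: "negligible N" "a \<in> N" "b \<in> N"
    "\<And>x. x \<in> {a..b} - N \<Longrightarrow> ((\<lambda>x. f (max a (min b x))) has_real_derivative vector_derivative f (at x within {a..b})) (at x)"
    "\<And>x. x \<in> {a..b} - N \<Longrightarrow> (f has_real_derivative vector_derivative f (at x within {a..b})) (at x)"
    by (rule lip_core[OF lip ab]) (rule that)
  define F where "F = (\<lambda>x. f (max a (min b x)))"
  have lipF: "C-lipschitz_on UNIV F" unfolding F_def using ab lip by (intro clamp_lip) auto
  have contF: "continuous_on UNIV F" using lipF by (rule lipschitz_on_continuous_on)
  define d where "d = (\<lambda>x. e x * (vector_derivative f (at x within {a..b}))\<^sup>2)"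
  define S where "S = {a..b} - N"
  have spk1: "negligible {x \<in> {a..b} - S. g x \<noteq> 0}" for g :: "real \<Rightarrow> real"
    by (rule negligible_subset[OF N(1)]) (auto simp: S_def)
  have spk2: "negligible {x \<in> S - {a..b}. g x \<noteq> 0}" for g :: "real \<Rightarrow> real"
  proof -
    have e: "{x \<in> S - {a..b}. g x \<noteq> 0} = {}" by (auto simp: S_def)
    show ?thesis unfolding e by (rule negligible_empty)
  qed
  obtain M where M: "\<And>x. x \<in> {a..b} \<Longrightarrow> \<bar>e x\<bar> \<le> M"
  proof -
    have "compact (e ` {a..b})" by (intro compact_continuous_image ce) simp
    then have "bounded (e ` {a..b})" by (rule compact_imp_bounded)
    then obtain M where "\<forall>y\<in>e ` {a..b}. norm y \<le> M" by (auto simp: bounded_iff)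
    then have "\<And>x. x \<in> {a..b} \<Longrightarrow> \<bar>e x\<bar> \<le> M" by simp
    then show ?thesis by (rule that)
  qed
  define fm where "fm m x = e x * (qs F m x)\<^sup>2" for m x
  have intS: "fm m integrable_on S" for m
  proof -
    have "continuous_on {a..b} (fm m)" unfolding fm_def
      by (intro continuous_on_mult ce continuous_on_power qs_cont contF)
    then have "fm m integrable_on {a..b}" by (rule integrable_continuous_real)
    then show ?thesis by (rule integrable_spike_set[OF _ spk1 spk2])
  qed
  have cC: "(\<lambda>x. M * C\<^sup>2) integrable_on S"
  proof -
    have "(\<lambda>x. M * C\<^sup>2) integrable_on {a..b}" by (intro integrable_continuous_real continuous_on_const)
    then show ?thesis by (rule integrable_spike_set[OF _ spk1 spk2])
  qed
  have bnd: "norm (fm m x) \<le> M * C\<^sup>2" if x: "x \<in> S" for m x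
  proof -
    have "\<bar>qs F m x\<bar> \<le> C" by (rule qs_bound[OF lipF])
    then have "(qs F m x)\<^sup>2 \<le> C\<^sup>2" by (metis abs_ge_zero order_trans power2_abs power_mono)
    moreover have "\<bar>e x\<bar> \<le> M" using x M by (auto simp: S_def)
    ultimately have "\<bar>e x\<bar> * (qs F m x)\<^sup>2 \<le> M * C\<^sup>2"
      by (intro mult_mono) auto
    then show ?thesis by (simp add: fm_def abs_mult)
  qed
  have conv: "(\<lambda>m. fm m x) \<longlonglongrightarrow> d x" if x: "x \<in> S" for x
  proof -
    have "(\<lambda>m. qs F m x) \<longlonglongrightarrow> vector_derivative f (at x within {a..b})"
      unfolding F_def using x by (intro qs_lim N(4)) (auto simp: S_def)
    then show ?thesis unfolding fm_def d_def by (intro tendsto_mult tendsto_const tendsto_power)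
  qed
  have "d integrable_on S"
    using dominated_convergence(1)[of fm S "\<lambda>x. M * C\<^sup>2" d, OF intS cC bnd conv] .
  then have "d integrable_on {a..b}"
    by (rule integrable_spike_set[OF _ spk2 spk1])
  then show ?thesis by (simp add: d_def)
qed

lemma lip_mult:
  fixes u v :: "real \<Rightarrow> real"
  assumes lu: "A-lipschitz_on S u" and lv: "B-lipschitz_on S v"
    and bu: "\<And>x. x\<in>S \<Longrightarrow> \<bar>u x\<bar> \<le> Mu" and bv: "\<And>x. x\<in>S \<Longrightarrow> \<bar>v x\<bar> \<le> Mv"
    and Mu0: "0 \<le> Mu" and Mv0: "0 \<le> Mv"
  shows "(Mu*B + Mv*A)-lipschitz_on S (\<lambda>x. u x * v x)"
proof (rule lipschitz_onI)
  have A0: "0 \<le> A" using lu by (rule lipschitz_on_nonneg)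
  have B0: "0 \<le> B" using lv by (rule lipschitz_on_nonneg)
  show "0 \<le> Mu*B + Mv*A" using A0 B0 Mu0 Mv0 by simp
  fix x y assume x: "x \<in> S" and y: "y \<in> S"
  have e: "u x * v x - u y * v y = u x * (v x - v y) + v y * (u x - u y)" by (simp add: algebra_simps)
  have dv: "\<bar>v x - v y\<bar> \<le> B * \<bar>x - y\<bar>" using lipschitz_onD[OF lv x y] by (simp add: dist_real_def)
  have du: "\<bar>u x - u y\<bar> \<le> A * \<bar>x - y\<bar>" using lipschitz_onD[OF lu x y] by (simp add: dist_real_def)
  have "\<bar>u x * v x - u y * v y\<bar> \<le> \<bar>u x\<bar> * \<bar>v x - v y\<bar> + \<bar>v y\<bar> * \<bar>u x - u y\<bar>"
    unfolding e by (metis abs_mult abs_triangle_ineq)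
  also have "\<dots> \<le> Mu * (B * \<bar>x - y\<bar>) + Mv * (A * \<bar>x - y\<bar>)"
    by (intro add_mono mult_mono bu[OF x] bv[OF y] dv du) (use Mu0 Mv0 in auto)
  finally show "dist (u x * v x) (u y * v y) \<le> (Mu*B + Mv*A) * dist x y"
    by (simp add: dist_real_def algebra_simps)
qed

lemma component_ineq:
  fixes L C k :: real and g \<phi> :: "real \<Rightarrow> real"
  assumes L0: "0 < L" and cg: "continuous_on {0..L} g" and gpos: "\<And>x. x \<in> {0..L} \<Longrightarrow> 0 < g x"
    and lip: "C-lipschitz_on {0..L} \<phi>" and ph0: "\<phi> 0 = 0" and phL: "\<phi> L = 0"
    and k0: "0 < k" and kM: "k * integral {0..L} g < pi"
  shows "k\<^sup>2 * integral {0..L} (\<lambda>x. (\<phi> x)\<^sup>2 * g x) \<le> integral {0..L} (\<lambda>x. (vector_derivative \<phi> (at x within {0..L}))\<^sup>2 / g x)"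
proof -
  define Gf where "Gf = (\<lambda>x. integral {0..x} g)"
  define M where "M = integral {0..L} g"
  have gint: "g integrable_on {a..b}" if "{a..b} \<subseteq> {0..L}" for a b
    by (rule integrable_continuous_real[OF continuous_on_subset[OF cg that]])
  have Gd: "(Gf has_real_derivative g x) (at x within {0..L})" if "x \<in> {0..L}" for x
    unfolding Gf_def by (rule integral_has_real_derivative[OF cg that])
  have Gcont: "continuous_on {0..L} Gf"
    unfolding continuous_on_eq_continuous_within using Gd by (blast intro: DERIV_continuous)
  have G0: "0 \<le> Gf x" if x: "x \<in> {0..L}" for x
    unfolding Gf_def using x gpos by (intro integral_nonneg gint) (auto simp: less_imp_le)
  have GM: "Gf x \<le> M" if x: "x \<in> {0..L}" for x
  proof -
    have "integral {0..x} g + integral {x..L} g = integral {0..L} g"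
      using x by (intro Henstock_Kurzweil_Integration.integral_combine gint) auto
    moreover have "0 \<le> integral {x..L} g"
      using x gpos by (intro integral_nonneg gint) (auto simp: less_imp_le)
    ultimately show ?thesis by (simp add: Gf_def M_def)
  qed
  define \<theta> where "\<theta> = (\<lambda>x. k * Gf x - k * M / 2)"
  have \<theta>b: "-(pi/2) < \<theta> x \<and> \<theta> x < pi/2" if x: "x \<in> {0..L}" for x
  proof -
    have "0 \<le> k * Gf x" using G0[OF x] k0 by simp
    moreover have "k * Gf x \<le> k * M" using GM[OF x] k0 by simp
    moreover have "k * M < pi" using kM by (simp add: M_def)
    ultimately show ?thesis by (simp add: \<theta>_def)
  qed
  have cpos: "0 < cos (\<theta> x)" if "x \<in> {0..L}" for x using \<theta>b[OF that] by (intro cos_gt_zero_pi) auto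
  define h where "h = (\<lambda>x. k * tan (\<theta> x))"
  define h' where "h' = (\<lambda>x. k * (inverse ((cos (\<theta> x))\<^sup>2) * (k * g x)))"
  have hd: "(h has_real_derivative h' x) (at x within {0..L})" if x: "x \<in> {0..L}" for x
  proof -
    have "((\<lambda>x. k * Gf x - k * M / 2) has_real_derivative (k * g x - 0)) (at x within {0..L})"
      by (intro DERIV_diff DERIV_cmult Gd[OF x] DERIV_const)
    then have \<theta>d: "(\<theta> has_real_derivative k * g x) (at x within {0..L})" by (simp add: \<theta>_def)
    have tand: "(tan has_real_derivative inverse ((cos (\<theta> x))\<^sup>2)) (at (\<theta> x))"
      using cpos[OF x] by (intro DERIV_tan) simp
    have "((\<lambda>x. tan (\<theta> x)) has_real_derivative inverse ((cos (\<theta> x))\<^sup>2) * (k * g x)) (at x within {0..L})"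
      by (rule DERIV_chain2[OF tand \<theta>d])
    then have "((\<lambda>x. k * tan (\<theta> x)) has_real_derivative k * (inverse ((cos (\<theta> x))\<^sup>2) * (k * g x))) (at x within {0..L})"
      by (rule DERIV_cmult)
    then show ?thesis by (simp add: h_def h'_def)
  qed
  have c\<theta>: "continuous_on {0..L} \<theta>" unfolding \<theta>_def
    by (intro continuous_on_diff continuous_on_mult continuous_on_const Gcont)
  have ccos: "continuous_on {0..L} (\<lambda>x. cos (\<theta> x))" by (rule continuous_on_cos[OF c\<theta>])
  have ch': "continuous_on {0..L} h'" unfolding h'_def
    by (intro continuous_on_mult continuous_on_const continuous_on_inverse continuous_on_power ccos cg)
       (use cpos in force)
  have ch: "continuous_on {0..L} h"
    unfolding continuous_on_eq_continuous_within using hd by (blast intro: DERIV_continuous)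
  have bnd_cont: "\<exists>B. \<forall>x\<in>{0..L}. \<bar>f x\<bar> \<le> B" if "continuous_on {0..L} f" for f :: "real \<Rightarrow> real"
  proof -
    have "compact (f ` {0..L})" by (intro compact_continuous_image that) simp
    then have "bounded (f ` {0..L})" by (rule compact_imp_bounded)
    then show ?thesis by (auto simp: bounded_iff)
  qed
  obtain Bh where Bh: "\<And>x. x \<in> {0..L} \<Longrightarrow> \<bar>h' x\<bar> \<le> Bh" using bnd_cont[OF ch'] by blast
  obtain Mh where Mh: "\<And>x. x \<in> {0..L} \<Longrightarrow> \<bar>h x\<bar> \<le> Mh" using bnd_cont[OF ch] by blast
  have Bh0: "0 \<le> Bh" using Bh[of 0] L0 by auto
  have Mh0: "0 \<le> Mh" using Mh[of 0] L0 by auto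
  have liph: "Bh-lipschitz_on {0..L} h"
  proof (rule lipschitz_onI)
    fix x y assume "x \<in> {0..L}" "y \<in> {0..L}"
    then have "norm (h x - h y) \<le> Bh * norm (x - y)"
      by (intro field_differentiable_bound[of "{0..L}" h h' Bh]) (auto simp: hd Bh)
    then show "dist (h x) (h y) \<le> Bh * dist x y" by (simp add: dist_real_def)
  qed (rule Bh0)
  have C0: "0 \<le> C" using lip by (rule lipschitz_on_nonneg)
  have bph: "\<bar>\<phi> x\<bar> \<le> C * L" if x: "x \<in> {0..L}" for x
  proof -
    have "dist (\<phi> x) (\<phi> 0) \<le> C * dist x 0" using x L0 by (intro lipschitz_onD[OF lip]) auto
    then have "\<bar>\<phi> x\<bar> \<le> C * x" using x ph0 by (simp add: dist_real_def)
    also have "\<dots> \<le> C * L" using x C0 by (intro mult_left_mono) auto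
    finally show ?thesis .
  qed
  have CL0: "0 \<le> C * L" using C0 L0 by simp
  have lipp2: "(C*L*C + C*L*C)-lipschitz_on {0..L} (\<lambda>x. \<phi> x * \<phi> x)"
    by (rule lip_mult[OF lip lip bph bph CL0 CL0])
  have bp2: "\<bar>\<phi> x * \<phi> x\<bar> \<le> C*L*(C*L)" if "x \<in> {0..L}" for x
    unfolding abs_mult using bph[OF that] by (intro mult_mono) auto
  define \<psi> where "\<psi> = (\<lambda>x. h x * (\<phi> x * \<phi> x))"
  have lip\<psi>: "(Mh*(C*L*C + C*L*C) + C*L*(C*L)*Bh)-lipschitz_on {0..L} \<psi>"
    unfolding \<psi>_def by (rule lip_mult[OF liph lipp2 Mh bp2 Mh0]) (auto intro!: mult_nonneg_nonneg CL0)
  have ftc: "((\<lambda>x. vector_derivative \<psi> (at x within {0..L})) has_integral (\<psi> L - \<psi> 0)) {0..L}"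
    by (rule lip_ftc[OF lip\<psi> L0])
  have \<psi>ends: "\<psi> L - \<psi> 0 = 0" by (simp add: \<psi>_def ph0 phL)
  obtain N1 where N1: "negligible N1" "0 \<in> N1" "L \<in> N1"
    "\<And>x. x \<in> {0..L} - N1 \<Longrightarrow> ((\<lambda>x. \<phi> (max 0 (min L x))) has_real_derivative vector_derivative \<phi> (at x within {0..L})) (at x)"
    "\<And>x. x \<in> {0..L} - N1 \<Longrightarrow> (\<phi> has_real_derivative vector_derivative \<phi> (at x within {0..L})) (at x)"
    by (rule lip_core[OF lip L0]) (rule that)
  obtain N2 where N2: "negligible N2" "0 \<in> N2" "L \<in> N2"
    "\<And>x. x \<in> {0..L} - N2 \<Longrightarrow> ((\<lambda>x. \<psi> (max 0 (min L x))) has_real_derivative vector_derivative \<psi> (at x within {0..L})) (at x)"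
    "\<And>x. x \<in> {0..L} - N2 \<Longrightarrow> (\<psi> has_real_derivative vector_derivative \<psi> (at x within {0..L})) (at x)"
    by (rule lip_core[OF lip\<psi> L0]) (rule that)
  define d\<phi> where "d\<phi> = (\<lambda>x. vector_derivative \<phi> (at x within {0..L}))"
  define d\<psi> where "d\<psi> = (\<lambda>x. vector_derivative \<psi> (at x within {0..L}))"
  define S where "S = {0..L} - (N1 \<union> N2)"
  have pointwise: "k\<^sup>2 * ((\<phi> x)\<^sup>2 * g x) - d\<psi> x \<le> (d\<phi> x)\<^sup>2 / g x" if xS: "x \<in> S" for x
  proof -
    have x: "x \<in> {0..L}" using xS by (simp add: S_def)
    have "x \<noteq> 0" "x \<noteq> L" using N1(2,3) xS unfolding S_def by blast+
    then have xi: "x \<in> {0<..<L}" using x by auto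
    have dp: "(\<phi> has_real_derivative d\<phi> x) (at x)" unfolding d\<phi>_def using xS by (intro N1(5)) (auto simp: S_def)
    have dps: "(\<psi> has_real_derivative d\<psi> x) (at x)" unfolding d\<psi>_def using xS by (intro N2(5)) (auto simp: S_def)
    have "at x within {0..L} = at x" using xi by (intro at_within_interior) (simp add: interior_atLeastAtMost_real)
    then have dh: "(h has_real_derivative h' x) (at x)" using hd[OF x] by simp
    have "(\<psi> has_real_derivative (h' x * (\<phi> x * \<phi> x) + (d\<phi> x * \<phi> x + d\<phi> x * \<phi> x) * h x)) (at x)"
      unfolding \<psi>_def by (intro DERIV_mult dh dp)
    then have e\<psi>: "d\<psi> x = h' x * (\<phi> x * \<phi> x) + (d\<phi> x * \<phi> x + d\<phi> x * \<phi> x) * h x"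
      by (rule DERIV_unique[OF dps])
    define c where "c = cos (\<theta> x)"
    define T where "T = tan (\<theta> x)"
    have c0: "c \<noteq> 0" using cpos[OF x] by (simp add: c_def)
    have sec: "inverse (c\<^sup>2) = 1 + T\<^sup>2" using tan_sec[OF c0[unfolded c_def]] by (simp add: c_def T_def power_inverse)
    have gx: "0 < g x" using gpos[OF x] .
    have key: "(d\<phi> x)\<^sup>2 / g x - (k\<^sup>2 * ((\<phi> x)\<^sup>2 * g x) - d\<psi> x) = (d\<phi> x + g x * k * T * \<phi> x)\<^sup>2 / g x"
      unfolding e\<psi> h'_def h_def using gx sec
      by (simp add: c_def[symmetric] T_def[symmetric] field_simps power2_eq_square) 
    have "0 \<le> (d\<phi> x + g x * k * T * \<phi> x)\<^sup>2 / g x" using gx by simp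
    then show ?thesis using key by linarith
  qed
  have negN: "negligible (N1 \<union> N2)" using N1(1) N2(1) by (rule negligible_Un)
  have spk1: "negligible {x \<in> {0..L} - S. f x \<noteq> 0}" for f :: "real \<Rightarrow> real"
    by (rule negligible_subset[OF negN]) (auto simp: S_def)
  have spk2: "negligible {x \<in> S - {0..L}. f x \<noteq> 0}" for f :: "real \<Rightarrow> real"
  proof -
    have e: "{x \<in> S - {0..L}. f x \<noteq> 0} = {}" by (auto simp: S_def)
    show ?thesis unfolding e by (rule negligible_empty)
  qed
  have cg': "continuous_on {0..L} (\<lambda>x. 1 / g x)"
    by (intro continuous_on_divide continuous_on_const cg) (use gpos in force)
  have intA: "(\<lambda>x. (d\<phi> x)\<^sup>2 / g x) integrable_on {0..L}"
  proof -
    have "(\<lambda>x. 1 / g x * (d\<phi> x)\<^sup>2) integrable_on {0..L}"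
      unfolding d\<phi>_def by (rule lip_sq_integrable[OF lip L0 cg'])
    moreover have "(\<lambda>x. 1 / g x * (d\<phi> x)\<^sup>2) = (\<lambda>x. (d\<phi> x)\<^sup>2 / g x)" by (rule ext) simp
    ultimately show ?thesis by simp
  qed
  have cpg: "continuous_on {0..L} (\<lambda>x. (\<phi> x)\<^sup>2 * g x)"
    by (intro continuous_on_mult continuous_on_power cg lipschitz_on_continuous_on[OF lip])
  have intP: "((\<lambda>x. (\<phi> x)\<^sup>2 * g x) has_integral integral {0..L} (\<lambda>x. (\<phi> x)\<^sup>2 * g x)) {0..L}"
    by (rule integrable_integral[OF integrable_continuous_real[OF cpg]])
  have intB: "((\<lambda>x. k\<^sup>2 * ((\<phi> x)\<^sup>2 * g x) - d\<psi> x) has_integral (k\<^sup>2 * integral {0..L} (\<lambda>x. (\<phi> x)\<^sup>2 * g x) - 0)) {0..L}"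
    using ftc \<psi>ends unfolding d\<psi>_def by (intro has_integral_diff has_integral_mult_right intP) simp
  have intA_S: "(\<lambda>x. (d\<phi> x)\<^sup>2 / g x) integrable_on S" by (rule integrable_spike_set[OF intA spk1 spk2])
  have intB_S: "(\<lambda>x. k\<^sup>2 * ((\<phi> x)\<^sup>2 * g x) - d\<psi> x) integrable_on S"
    by (rule integrable_spike_set[OF has_integral_integrable[OF intB] spk1 spk2])
  have "k\<^sup>2 * integral {0..L} (\<lambda>x. (\<phi> x)\<^sup>2 * g x) = integral {0..L} (\<lambda>x. k\<^sup>2 * ((\<phi> x)\<^sup>2 * g x) - d\<psi> x)"
    using integral_unique[OF intB] by simp
  also have "\<dots> = integral S (\<lambda>x. k\<^sup>2 * ((\<phi> x)\<^sup>2 * g x) - d\<psi> x)" by (rule integral_spike_set[OF spk1 spk2])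
  also have "\<dots> \<le> integral S (\<lambda>x. (d\<phi> x)\<^sup>2 / g x)" by (rule integral_le[OF intB_S intA_S pointwise])
  also have "\<dots> = integral {0..L} (\<lambda>x. (d\<phi> x)\<^sup>2 / g x)" by (rule integral_spike_set[OF spk1 spk2, symmetric])
  finally show ?thesis by (simp add: d\<phi>_def)
qed

lemma smooth_cont:
  assumes "smooth_on_interval a b f" shows "continuous_on {a..b} f"
proof -
  obtain D :: "nat \<Rightarrow> real \<Rightarrow> real" where D0: "\<forall>x\<in>{a..b}. D 0 x = f x"
    and Dd: "\<forall>k. \<forall>x\<in>{a..b}. (D k has_real_derivative D (Suc k) x) (at x within {a..b})"
    using assms unfolding smooth_on_interval_def by blast
  have "continuous_on {a..b} (D 0)"
    unfolding continuous_on_eq_continuous_within using Dd by (blast intro: DERIV_continuous)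
  then show ?thesis by (rule continuous_on_eq) (use D0 in auto)
qed

lemma integral_nonneg':
  fixes f :: "real \<Rightarrow> real"
  assumes "\<And>x. x \<in> S \<Longrightarrow> 0 \<le> f x" shows "0 \<le> integral S f"
proof (cases "f integrable_on S")
  case True then show ?thesis using assms by (rule integral_nonneg)
next
  case False then show ?thesis by (simp add: not_integrable_integral)
qed

lemma tent_lip: "0 < L \<Longrightarrow> L-lipschitz_on {0..L} (\<lambda>x. x * (L - x::real))"
proof (rule lipschitz_onI)
  fix x y assume L: "0 < L" and x: "x \<in> {0..L}" and y: "y \<in> {0..L}"
  have e: "x * (L - x) - y * (L - y) = (x - y) * (L - x - y)" by (simp add: algebra_simps)
  have "\<bar>L - x - y\<bar> \<le> L" using x y by (auto simp: abs_le_iff)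
  then have ineq: "\<bar>x - y\<bar> * \<bar>L - x - y\<bar> \<le> \<bar>x - y\<bar> * L" by (intro mult_left_mono) auto
  have d: "dist (x * (L - x)) (y * (L - y)) = \<bar>x - y\<bar> * \<bar>L - x - y\<bar>" by (simp only: dist_real_def e abs_mult)
  have "L * dist x y = \<bar>x - y\<bar> * L" by (simp add: dist_real_def)
  then show "dist (x * (L - x)) (y * (L - y)) \<le> L * dist x y" using d ineq by linarith
qed simp

theorem lemma3:
  fixes n :: nat and L :: "nat \<Rightarrow> real" and g :: "nat \<Rightarrow> real \<Rightarrow> real"
  assumes "n \<ge> 1"
    and "\<And>i. i < n \<Longrightarrow> L i > 0"
    and "\<And>i. i < n \<Longrightarrow> smooth_on_interval 0 (L i) (g i)"
    and "\<And>i x. i < n \<Longrightarrow> x \<in> {0..L i} \<Longrightarrow> g i x > 0"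
  shows "weighted_fund_freq n L g \<ge> pi / (\<Sum>i<n. integral {0..L i} (g i))"
proof -
  note n1 = assms(1) and Lpos = assms(2) and sm = assms(3) and gpos = assms(4)
  let ?M = "\<Sum>i<n. integral {0..L i} (g i)"
  define num where "num \<phi> = (\<Sum>i<n. integral {0..L i} (\<lambda>x. (vector_derivative (\<phi> i) (at x within {0..L i}))\<^sup>2 / g i x))" for \<phi> :: "nat \<Rightarrow> real \<Rightarrow> real"
  define den where "den \<phi> = (\<Sum>i<n. integral {0..L i} (\<lambda>x. (\<phi> i x)\<^sup>2 * g i x))" for \<phi> :: "nat \<Rightarrow> real \<Rightarrow> real"
  define X where "X = {sqrt (num \<phi> / den \<phi>) | \<phi>. admissible n L \<phi>}"
  have wX: "weighted_fund_freq n L g = Inf X"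
    by (simp add: weighted_fund_freq_def X_def num_def den_def)
  have cg: "continuous_on {0..L i} (g i)" if "i < n" for i by (rule smooth_cont[OF sm[OF that]])
  have Mi0: "0 \<le> integral {0..L i} (g i)" if i: "i < n" for i
    using gpos[OF i] by (intro integral_nonneg integrable_continuous_real cg i) (auto simp: less_imp_le)
  have Mle: "integral {0..L i} (g i) \<le> ?M" if i: "i < n" for i
    using i Mi0 by (intro member_le_sum) auto
  have M0: "0 \<le> ?M" using Mi0 by (intro sum_nonneg) auto
  have ne: "X \<noteq> {}"
  proof -
    define \<phi>0 where "\<phi>0 = (\<lambda>i (x::real). x * (L i - x))"
    have "admissible n L \<phi>0"
      unfolding admissible_def
    proof (intro conjI allI impI)
      fix i assume i: "i < n"
      show "\<exists>C. C-lipschitz_on {0..L i} (\<phi>0 i)" unfolding \<phi>0_def using tent_lip[OF Lpos[OF i]] by blast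
      show "\<phi>0 i 0 = 0" by (simp add: \<phi>0_def)
      show "\<phi>0 i (L i) = 0" by (simp add: \<phi>0_def)
    next
      have "0 < n" using n1 by simp
      moreover have "L 0 / 2 \<in> {0..L 0}" using Lpos[of 0] n1 by auto
      moreover have "\<phi>0 0 (L 0 / 2) \<noteq> 0" using Lpos[of 0] n1 by (simp add: \<phi>0_def)
      ultimately show "\<exists>i<n. \<exists>x\<in>{0..L i}. \<phi>0 i x \<noteq> 0" by blast
    qed
    then show ?thesis unfolding X_def by blast
  qed
  have lb: "pi / ?M \<le> s" if s: "s \<in> X" for s
  proof -
    obtain \<phi> where s_eq: "s = sqrt (num \<phi> / den \<phi>)" and adm: "admissible n L \<phi>" using s by (auto simp: X_def)
    have lipi: "\<exists>C. C-lipschitz_on {0..L i} (\<phi> i)" and z0: "\<phi> i 0 = 0" and zL: "\<phi> i (L i) = 0" if "i < n" for i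
      using adm that unfolding admissible_def by blast+
    obtain i0 x0 where i0: "i0 < n" and x0: "x0 \<in> {0..L i0}" and nz: "\<phi> i0 x0 \<noteq> 0"
      using adm unfolding admissible_def by blast
    have cpg: "continuous_on {0..L i} (\<lambda>x. (\<phi> i x)\<^sup>2 * g i x)" if i: "i < n" for i
    proof -
      obtain C where "C-lipschitz_on {0..L i} (\<phi> i)" using lipi[OF i] by blast
      then have "continuous_on {0..L i} (\<phi> i)" by (rule lipschitz_on_continuous_on)
      then show ?thesis by (intro continuous_on_mult continuous_on_power cg i)
    qed
    have dterm0: "0 \<le> integral {0..L i} (\<lambda>x. (\<phi> i x)\<^sup>2 * g i x)" if i: "i < n" for i
      using gpos[OF i] by (intro integral_nonneg integrable_continuous_real cpg i) (auto simp: less_imp_le)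
    have dterm_pos: "0 < integral {0..L i0} (\<lambda>x. (\<phi> i0 x)\<^sup>2 * g i0 x)"
    proof (rule ccontr)
      assume "\<not> ?thesis"
      then have z: "integral {0..L i0} (\<lambda>x. (\<phi> i0 x)\<^sup>2 * g i0 x) = 0" using dterm0[OF i0] by simp
      have hi: "((\<lambda>x. (\<phi> i0 x)\<^sup>2 * g i0 x) has_integral 0) (cbox 0 (L i0))"
        using integrable_integral[OF integrable_continuous_real[OF cpg[OF i0]]] z by simp
      have "(\<phi> i0 x0)\<^sup>2 * g i0 x0 = 0"
      proof (rule has_integral_0_cbox_imp_0[OF _ _ hi])
        show "continuous_on (cbox 0 (L i0)) (\<lambda>x. (\<phi> i0 x)\<^sup>2 * g i0 x)" using cpg[OF i0] by simp
        show "0 \<le> (\<phi> i0 x)\<^sup>2 * g i0 x" if "x \<in> box 0 (L i0)" for x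
          using that gpos[OF i0, of x] by (simp add: less_imp_le)
        show "box 0 (L i0) \<noteq> {}" using Lpos[OF i0] by simp
        show "x0 \<in> cbox 0 (L i0)" using x0 by simp
      qed
      then show False using nz gpos[OF i0 x0] by simp
    qed
    have den_pos: "0 < den \<phi>" unfolding den_def
      by (rule sum_pos2[of "{..<n}" i0]) (use i0 dterm_pos dterm0 in auto)
    show ?thesis
    proof (cases "?M = 0")
      case True
      have "0 \<le> num \<phi>" unfolding num_def
        by (intro sum_nonneg integral_nonneg') (use gpos in \<open>auto simp: less_imp_le\<close>)
      then have "0 \<le> num \<phi> / den \<phi>" using den_pos by simp
      then show ?thesis using True by (simp add: s_eq)
    next
      case False
      then have Mpos: "0 < ?M" using M0 by simp
      have "0 < pi / ?M" using Mpos by simp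
      then show ?thesis
      proof (rule dense_le_bounded)
        fix w assume w0: "0 < w" and wM: "w < pi / ?M"
        have wM': "w * ?M < pi" using wM Mpos by (simp add: less_divide_eq)
        have comp: "w\<^sup>2 * integral {0..L i} (\<lambda>x. (\<phi> i x)\<^sup>2 * g i x) \<le> integral {0..L i} (\<lambda>x. (vector_derivative (\<phi> i) (at x within {0..L i}))\<^sup>2 / g i x)"
          if i: "i < n" for i
        proof -
          obtain C where C: "C-lipschitz_on {0..L i} (\<phi> i)" using lipi[OF i] by blast
          have "w * integral {0..L i} (g i) \<le> w * ?M" using Mle[OF i] w0 by simp
          then have kM: "w * integral {0..L i} (g i) < pi" using wM' by linarith
          show ?thesis
            by (rule component_ineq[OF Lpos[OF i] cg[OF i] gpos[OF i] C z0[OF i] zL[OF i] w0 kM])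
        qed
        have "w\<^sup>2 * den \<phi> \<le> num \<phi>" unfolding den_def num_def sum_distrib_left
          by (rule sum_mono) (use comp in simp)
        then have "w\<^sup>2 \<le> num \<phi> / den \<phi>" using den_pos by (simp add: pos_le_divide_eq)
        then have "sqrt (w\<^sup>2) \<le> sqrt (num \<phi> / den \<phi>)" by (rule real_sqrt_le_mono)
        then show "w \<le> s" using w0 by (simp add: s_eq)
      qed
    qed
  qed
  show ?thesis unfolding wX by (rule cInf_greatest[OF ne lb])
qed
end
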